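(* Let $(X,d_X)$ be a metric space and $C\in(0,\infty)$. Then $\Delta_X^{(c)}(R)\leq CR$ for all $R\in[0,\infty)$ if and only if $\Delta_X^{(u)}(r)\geq\frac1C r$ for all $r>0$.
   Context: For a cover $\mathcal{U}$ of $X$: $\mathrm{diam}(\mathcal{U})=\sup_{U\in\mathcal{U}}\mathrm{diam}(U)$; $\mathcal{L}(\mathcal{U})=\sup\{d\in[0,\infty): \text{every } E\subseteq X \text{ with } \mathrm{diam}(E)<d \text{ is contained in some } U\in\mathcal{U}\}$; point-finite means each point lies in only finitely many members. $\Delta_X^{(u)}(r)=\sup\{\mathcal{L}(\mathcal{U}): \mathcal{U} \text{ point-finite cover of } X,\ \mathrm{diam}(\mathcal{U})\leq r\}$, $\Delta_X^{(c)}(R)=\inf\{\mathrm{diam}(\mathcal{U}): \mathcal{U} \text{ point-finite cover of } X,\ \mathcal{L}(\mathcal{U})\geq R\}$. *)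

theory Defs
  imports "HOL-Analysis.Analysis"
begin

definition ediam :: "('a \<Rightarrow> 'a \<Rightarrow> real) \<Rightarrow> 'a set \<Rightarrow> ereal" where
  "ediam d E = Sup (insert 0 {ereal (d x y) | x y. x \<in> E \<and> y \<in> E})"

definition cover_diam :: "('a \<Rightarrow> 'a \<Rightarrow> real) \<Rightarrow> 'a set set \<Rightarrow> ereal" where
  "cover_diam d \<U> = Sup (insert 0 (ediam d ` \<U>))"

definition lebesgue_num :: "'a set \<Rightarrow> ('a \<Rightarrow> 'a \<Rightarrow> real) \<Rightarrow> 'a set set \<Rightarrow> ereal" where
  "lebesgue_num M d \<U> = Sup {ereal t | t. 0 \<le> t \<and>
      (\<forall>E. E \<subseteq> M \<and> ediam d E < ereal t \<longrightarrow> (\<exists>U\<in>\<U>. E \<subseteq> U))}"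

definition is_cover :: "'a set \<Rightarrow> 'a set set \<Rightarrow> bool" where
  "is_cover M \<U> \<longleftrightarrow> (\<forall>U\<in>\<U>. U \<subseteq> M) \<and> \<Union>\<U> = M"

definition point_finite :: "'a set \<Rightarrow> 'a set set \<Rightarrow> bool" where
  "point_finite M \<U> \<longleftrightarrow> (\<forall>x\<in>M. finite {U\<in>\<U>. x \<in> U})"

definition Delta_u :: "'a set \<Rightarrow> ('a \<Rightarrow> 'a \<Rightarrow> real) \<Rightarrow> real \<Rightarrow> ereal" where
  "Delta_u M d r = Sup {lebesgue_num M d \<U> | \<U>.
      is_cover M \<U> \<and> point_finite M \<U> \<and> cover_diam d \<U> \<le> ereal r}"

definition Delta_c :: "'a set \<Rightarrow> ('a \<Rightarrow> 'a \<Rightarrow> real) \<Rightarrow> real \<Rightarrow> ereal" where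
  "Delta_c M d R = Inf {cover_diam d \<U> | \<U>.
      is_cover M \<U> \<and> point_finite M \<U> \<and> lebesgue_num M d \<U> \<ge> ereal R}"

end

theory Submission
  imports Defs
begin

theorem lemma3p6:
  fixes M :: "'a set" and d :: "'a \<Rightarrow> 'a \<Rightarrow> real" and C :: real
  assumes "Metric_space M d" and "0 < C"
  shows "(\<forall>R\<ge>0. Delta_c M d R \<le> ereal (C * R))
     \<longleftrightarrow> (\<forall>r>0. Delta_u M d r \<ge> ereal (r / C))"
proof
  assume H: "\<forall>R\<ge>0. Delta_c M d R \<le> ereal (C * R)"
  show "\<forall>r>0. Delta_u M d r \<ge> ereal (r / C)"
  proof (intro allI impI)
    fix r :: real assume r: "r > 0"
    have "ereal 0 < ereal (r / C)" using r assms(2) by simp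
    then show "ereal (r / C) \<le> Delta_u M d r"
    proof (rule dense_le_bounded)
      fix w assume w1: "ereal 0 < w" and w2: "w < ereal (r / C)"
      then obtain R' where wR: "w = ereal R'" by (cases w) auto
      have R'1: "0 < R'" and R'2: "R' < r / C" using w1 w2 wR by auto
      have "C * R' < r" using R'2 assms(2) by (simp add: field_simps)
      moreover have "Delta_c M d R' \<le> ereal (C * R')" using H R'1 by simp
      moreover have "ereal (C * R') < ereal r" using \<open>C * R' < r\<close> by simp
      ultimately have "Delta_c M d R' < ereal r" using order.strict_trans1 by blast
      then obtain U where U: "is_cover M U" "point_finite M U" "lebesgue_num M d U \<ge> ereal R'"
        "cover_diam d U < ereal r"
        unfolding Delta_c_def by (auto simp: Inf_less_iff)
      hence "lebesgue_num M d U \<le> Delta_u M d r"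
        unfolding Delta_u_def by (intro Sup_upper) auto
      with U(3) show "w \<le> Delta_u M d r" using wR by simp
    qed
  qed
next
  assume H: "\<forall>r>0. Delta_u M d r \<ge> ereal (r / C)"
  show "\<forall>R\<ge>0. Delta_c M d R \<le> ereal (C * R)"
  proof (intro allI impI)
    fix R :: real assume R: "R \<ge> 0"
    have "ereal (C * R) < \<infinity>" by simp
    then show "Delta_c M d R \<le> ereal (C * R)"
    proof (rule dense_ge_bounded)
      fix w assume w1: "ereal (C * R) < w" and w2: "w < \<infinity>"
      then obtain r where wr: "w = ereal r" by (cases w) auto
      have r1: "C * R < r" using w1 wr by simp
      have rpos: "r > 0" using r1 R assms(2) by (smt (verit) mult_nonneg_nonneg)
      have "R < r / C" using r1 assms(2) by (simp add: field_simps)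
      moreover have "ereal (r / C) \<le> Delta_u M d r" using H rpos by simp
      moreover have "ereal R < ereal (r / C)" using \<open>R < r / C\<close> by simp
      ultimately have "ereal R < Delta_u M d r" using order.strict_trans2 by blast
      then obtain U where U: "is_cover M U" "point_finite M U" "ereal R < lebesgue_num M d U"
        "cover_diam d U \<le> ereal r"
        unfolding Delta_u_def by (auto simp: less_Sup_iff)
      hence "Delta_c M d R \<le> cover_diam d U"
        unfolding Delta_c_def by (intro Inf_lower) auto
      with U(4) show "Delta_c M d R \<le> w" using wr by simp
    qed
  qed
qed

end
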